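(* Let $S$ be a numerical semigroup with minimal generators $e<a_1<\dots<a_t$. Let $0\le i<e$ and write ${\rm adj}(S_i)=\{u_0<u_1<u_2<\cdots\}$. Let $j>0$, $0\le k<j$ and $\mathbf x\in\mathcal R(u_j)$. Then $|\mathbf x|<\min{\rm ord}(u_k;B^{\mathcal D})-\frac{u_j-u_k}{e}$.
   Context: A numerical semigroup is a submonoid of $(\mathbb N,+)$ with finite complement. ${\rm ord}(n;S)$ is the maximum of $\sum c_i$ over $(c_0,\dots,c_t)\in\mathbb N^{t+1}$ with $c_0e+\sum c_ia_i=n$. Let $d_i=a_i-e$, $B=\langle e,d_1,\dots,d_t\rangle$, $\mathcal D=(e,d_1,\dots,d_t)$. A $B^{\mathcal D}$-factorization of $b$ is $\mathbf x=(x_0,\dots,x_t)\in\mathbb N^{t+1}$ with $x_0e+\sum x_id_i=b$, of length $|\mathbf x|=\sum x_i$. $\min{\rm ord}(b;B^{\mathcal D})$ is the minimal such length, and $\mathcal P(b)$ is the set of all of them. $S_i=\{s\in S:s\equiv i\pmod e\}$ and ${\rm adj}(S_i)=\{s-{\rm ord}(s;S)e:s\in S_i\}$. Define $\mathcal R(u_0)=\mathcal P(u_0)$ and, for $j>0$, $\mathcal R(u_j)=\{\mathbf x\in\mathcal P(u_j):|\mathbf x|<\min{\rm ord}(u_{j-1};B^{\mathcal D})-\frac{u_j-u_{j-1}}{e}\}$. *)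

theory Defs
  imports Complex_Main
begin

definition numerical_semigroup :: "nat set \<Rightarrow> bool" where
  "numerical_semigroup S \<longleftrightarrow> 0 \<in> S \<and> (\<forall>x\<in>S. \<forall>y\<in>S. x + y \<in> S) \<and> finite (UNIV - S)"

definition minimal_generators :: "nat set \<Rightarrow> nat set" where
  "minimal_generators S = {s \<in> S. s \<noteq> 0 \<and>
      \<not> (\<exists>x\<in>S. \<exists>y\<in>S. x \<noteq> 0 \<and> y \<noteq> 0 \<and> s = x + y)}"

text \<open>Vectors (c_0,...,c_t) are functions nat => nat vanishing above t.\<close>
definition vec_len :: "nat \<Rightarrow> (nat \<Rightarrow> nat) \<Rightarrow> nat" where
  "vec_len t c = (\<Sum>i\<le>t. c i)"

definition ordS :: "nat \<Rightarrow> (nat \<Rightarrow> nat) \<Rightarrow> nat \<Rightarrow> nat \<Rightarrow> nat" where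
  "ordS e a t n = Max {vec_len t c | c. (\<forall>i>t. c i = 0) \<and>
       c 0 * e + (\<Sum>i\<in>{1..t}. c i * a i) = n}"

definition dgen :: "nat \<Rightarrow> (nat \<Rightarrow> nat) \<Rightarrow> nat \<Rightarrow> nat" where
  "dgen e a i = a i - e"

definition BD_facts :: "nat \<Rightarrow> (nat \<Rightarrow> nat) \<Rightarrow> nat \<Rightarrow> nat \<Rightarrow> (nat \<Rightarrow> nat) set" where
  "BD_facts e a t b = {x. (\<forall>i>t. x i = 0) \<and>
       x 0 * e + (\<Sum>i\<in>{1..t}. x i * dgen e a i) = b}"

definition min_ord_BD :: "nat \<Rightarrow> (nat \<Rightarrow> nat) \<Rightarrow> nat \<Rightarrow> nat \<Rightarrow> nat" where
  "min_ord_BD e a t b = Min (vec_len t ` BD_facts e a t b)"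

definition adjS :: "nat set \<Rightarrow> nat \<Rightarrow> (nat \<Rightarrow> nat) \<Rightarrow> nat \<Rightarrow> nat \<Rightarrow> nat set" where
  "adjS S e a t i = {s - ordS e a t s * e | s. s \<in> S \<and> s mod e = i}"

definition pred_in :: "nat set \<Rightarrow> nat \<Rightarrow> nat" where
  "pred_in A u = Max {v \<in> A. v < u}"

definition R_set :: "nat set \<Rightarrow> nat \<Rightarrow> (nat \<Rightarrow> nat) \<Rightarrow> nat \<Rightarrow> nat \<Rightarrow> nat \<Rightarrow> (nat \<Rightarrow> nat) set" where
  "R_set S e a t i u =
     (let A = adjS S e a t i in
      if u = Min A then BD_facts e a t u
      else {x \<in> BD_facts e a t u.
              real (vec_len t x) < real (min_ord_BD e a t (pred_in A u))
                 - (real u - real (pred_in A u)) / real e})"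

end

theory Submission
  imports Defs
begin

definition isfact :: "nat \<Rightarrow> (nat \<Rightarrow> nat) \<Rightarrow> nat \<Rightarrow> (nat \<Rightarrow> nat) \<Rightarrow> nat \<Rightarrow> bool" where
  "isfact e a t c s \<longleftrightarrow> (\<forall>i>t. c i = 0) \<and> c 0 * e + (\<Sum>i\<in>{1..t}. c i * a i) = s"

lemma vec_len_split: "vec_len t c = c 0 + (\<Sum>i\<in>{1..t}. c i)"
  unfolding vec_len_def by (simp add: atMost_atLeast0 sum.atLeast_Suc_atMost)

lemma ordS_alt: "ordS e a t s = Max {vec_len t c | c. isfact e a t c s}"
  unfolding ordS_def isfact_def by simp

lemma fact_len_le:
  assumes "0 < e" "\<forall>j\<in>{1..t}. e < a j" "isfact e a t c s"
  shows "vec_len t c * e \<le> s"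
proof -
  have "(\<Sum>i\<in>{1..t}. c i) * e = (\<Sum>i\<in>{1..t}. c i * e)" by (simp add: sum_distrib_right)
  also have "\<dots> \<le> (\<Sum>i\<in>{1..t}. c i * a i)"
    using assms(2) by (intro sum_mono) (simp add: less_imp_le)
  finally show ?thesis using assms(3) unfolding isfact_def vec_len_split
    by (simp add: algebra_simps)
qed

lemma fact_len_le2:
  assumes "0 < e" "\<forall>j\<in>{1..t}. e < a j" "isfact e a t c s"
  shows "vec_len t c \<le> s"
proof -
  have "vec_len t c * 1 \<le> vec_len t c * e" using assms(1) by (intro mult_le_mono2) simp
  then show ?thesis using le_trans[OF _ fact_len_le[OF assms]] by simp
qed

lemma finite_F:
  assumes "0 < e" "\<forall>j\<in>{1..t}. e < a j"
  shows "finite {vec_len t c | c. isfact e a t c s}"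
  by (rule finite_subset[of _ "{..s}"]) (use fact_len_le2[OF assms] in auto)

lemma ord_ge:
  assumes "0 < e" "\<forall>j\<in>{1..t}. e < a j" "isfact e a t c s"
  shows "vec_len t c \<le> ordS e a t s"
  unfolding ordS_alt using finite_F[OF assms(1,2)] assms(3) by (intro Max_ge) auto

lemma ord_attained:
  assumes "0 < e" "\<forall>j\<in>{1..t}. e < a j" "isfact e a t c s"
  shows "\<exists>c. isfact e a t c s \<and> vec_len t c = ordS e a t s"
proof -
  have "ordS e a t s \<in> {vec_len t c | c. isfact e a t c s}"
    unfolding ordS_alt using finite_F[OF assms(1,2)] assms(3) by (intro Max_in) auto
  then show ?thesis by auto
qed

lemma ord_add:
  assumes "0 < e" "\<forall>j\<in>{1..t}. e < a j" "isfact e a t c s"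
  shows "ordS e a t s + r \<le> ordS e a t (s + r * e)"
proof -
  obtain c where c: "isfact e a t c s" "vec_len t c = ordS e a t s"
    using ord_attained[OF assms] by blast
  define c' where "c' = c(0 := c 0 + r)"
  have s1: "(\<Sum>i\<in>{1..t}. c' i * a i) = (\<Sum>i\<in>{1..t}. c i * a i)"
    by (rule sum.cong) (auto simp: c'_def)
  have s2: "(\<Sum>i\<in>{1..t}. c' i) = (\<Sum>i\<in>{1..t}. c i)"
    by (rule sum.cong) (auto simp: c'_def)
  have "isfact e a t c' (s + r * e)"
    using c(1) s1 unfolding isfact_def by (auto simp: c'_def algebra_simps)
  moreover have "vec_len t c' = vec_len t c + r"
    unfolding vec_len_split s2 by (simp add: c'_def)
  ultimately show ?thesis using ord_ge[OF assms(1,2)] c(2) by metis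
qed

lemma gen:
  assumes "numerical_semigroup S"
    and "minimal_generators S = insert e (a ` {1..t})"
    and "s \<in> S"
  shows "\<exists>c. isfact e a t c s"
  using assms(3)
proof (induction s rule: less_induct)
  case (less s)
  show ?case
  proof (cases "s = 0")
    case True
    then show ?thesis by (intro exI[of _ "\<lambda>_. 0"]) (simp add: isfact_def)
  next
    case False
    show ?thesis
    proof (cases "s \<in> minimal_generators S")
      case True
      then have "s = e \<or> (\<exists>k\<in>{1..t}. s = a k)" using assms(2) by auto
      then show ?thesis
      proof
        assume "s = e"
        then show ?thesis by (intro exI[of _ "\<lambda>i. if i = 0 then 1 else 0"]) (simp add: isfact_def)
      next
        assume "\<exists>k\<in>{1..t}. s = a k"
        then obtain k where k: "k \<in> {1..t}" "s = a k" by blast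
        have "(\<Sum>i\<in>{1..t}. (if i = k then 1 else 0) * a i) = a k"
          using k(1) by (simp add: if_distrib[of "\<lambda>x. x * _"] sum.delta cong: if_cong)
        then show ?thesis using k
          by (intro exI[of _ "\<lambda>i. if i = k then 1 else 0"]) (auto simp: isfact_def)
      qed
    next
      case nm: False
      then obtain x y where xy: "x \<in> S" "y \<in> S" "x \<noteq> 0" "y \<noteq> 0" "s = x + y"
        using False less.prems unfolding minimal_generators_def by auto
      obtain cx where cx: "isfact e a t cx x" using less.IH[of x] xy by auto
      obtain cy where cy: "isfact e a t cy y" using less.IH[of y] xy by auto
      have "isfact e a t (\<lambda>i. cx i + cy i) s"
        using cx cy xy(5) unfolding isfact_def by (auto simp: algebra_simps sum.distrib)
      then show ?thesis by blast
    qed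
  qed
qed

lemma ns_gen_in:
  assumes "minimal_generators S = insert e (a ` {1..t})"
  shows "e \<in> S" "\<And>j. j \<in> {1..t} \<Longrightarrow> a j \<in> S" "e \<noteq> 0"
proof -
  have "e \<in> minimal_generators S" "\<And>j. j \<in> {1..t} \<Longrightarrow> a j \<in> minimal_generators S"
    using assms by auto
  then show "e \<in> S" "\<And>j. j \<in> {1..t} \<Longrightarrow> a j \<in> S" "e \<noteq> 0"
    unfolding minimal_generators_def by auto
qed


lemma BD_len_le:
  assumes "0 < e" "\<forall>j\<in>{1..t}. e < a j" "x \<in> BD_facts e a t b"
  shows "vec_len t x \<le> b"
proof -
  have h1: "(\<Sum>i\<in>{1..t}. x i) \<le> (\<Sum>i\<in>{1..t}. x i * dgen e a i)"
  proof (intro sum_mono)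
    fix i assume "i \<in> {1..t}"
    then have "e < a i" using assms(2) by blast
    then have "1 \<le> dgen e a i" by (simp add: dgen_def)
    then show "x i \<le> x i * dgen e a i" using mult_le_mono2[of 1 "dgen e a i" "x i"] by simp
  qed
  have h2: "x 0 \<le> x 0 * e" using assms(1) by simp
  show ?thesis using add_le_mono[OF h2 h1] assms(3) unfolding BD_facts_def vec_len_split by auto
qed

lemma minord_le:
  assumes "0 < e" "\<forall>j\<in>{1..t}. e < a j" "x \<in> BD_facts e a t b"
  shows "min_ord_BD e a t b \<le> vec_len t x"
proof -
  have "finite (vec_len t ` BD_facts e a t b)"
    by (rule finite_subset[of _ "{..b}"]) (use BD_len_le[OF assms(1,2)] in auto)
  then show ?thesis unfolding min_ord_BD_def using assms(3) by (intro Min_le) auto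
qed

lemma minord_attained:
  assumes "0 < e" "\<forall>j\<in>{1..t}. e < a j" "x \<in> BD_facts e a t b"
  shows "\<exists>y \<in> BD_facts e a t b. vec_len t y = min_ord_BD e a t b"
proof -
  have "finite (vec_len t ` BD_facts e a t b)"
    by (rule finite_subset[of _ "{..b}"]) (use BD_len_le[OF assms(1,2)] in auto)
  then have "min_ord_BD e a t b \<in> vec_len t ` BD_facts e a t b"
    unfolding min_ord_BD_def using assms(3) by (intro Min_in) auto
  then show ?thesis by auto
qed

lemma sum_dgen:
  assumes "\<forall>j\<in>{1..t}. e < a j"
  shows "(\<Sum>i\<in>{1..t}. c i * a i) = (\<Sum>i\<in>{1..t}. c i * dgen e a i) + (\<Sum>i\<in>{1..t}. c i) * e"
proof -
  have "(\<Sum>i\<in>{1..t}. c i * a i) = (\<Sum>i\<in>{1..t}. c i * dgen e a i + c i * e)"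
  proof (intro sum.cong refl)
    fix i assume "i \<in> {1..t}"
    then have "e < a i" using assms by blast
    then have "a i = dgen e a i + e" by (simp add: dgen_def)
    then show "c i * a i = c i * dgen e a i + c i * e" by (metis add_mult_distrib2)
  qed
  then show ?thesis by (simp add: sum.distrib sum_distrib_right)
qed

lemma lift_fact:
  assumes "\<forall>j\<in>{1..t}. e < a j" "y \<in> BD_facts e a t v"
  shows "isfact e a t (y(0 := 2 * y 0)) (v + vec_len t y * e)"
    and "vec_len t y \<le> vec_len t (y(0 := 2 * y 0))"
proof -
  have s1: "(\<Sum>i\<in>{1..t}. (y(0 := 2 * y 0)) i * a i) = (\<Sum>i\<in>{1..t}. y i * a i)"
    by (rule sum.cong) auto
  have s2: "(\<Sum>i\<in>{1..t}. (y(0 := 2 * y 0)) i) = (\<Sum>i\<in>{1..t}. y i)"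
    by (rule sum.cong) auto
  show "isfact e a t (y(0 := 2 * y 0)) (v + vec_len t y * e)"
    using assms(2) unfolding isfact_def BD_facts_def s1 sum_dgen[OF assms(1)] vec_len_split
    by (auto simp: algebra_simps)
  show "vec_len t y \<le> vec_len t (y(0 := 2 * y 0))"
    unfolding vec_len_split s2 by simp
qed

lemma drop_fact:
  assumes "\<forall>j\<in>{1..t}. e < a j" "isfact e a t c s" "vec_len t c = ordS e a t s"
  shows "c(0 := 0) \<in> BD_facts e a t (s - ordS e a t s * e)"
    and "vec_len t (c(0 := 0)) \<le> ordS e a t s"
proof -
  have s1: "(\<Sum>i\<in>{1..t}. (c(0 := 0)) i * dgen e a i) = (\<Sum>i\<in>{1..t}. c i * dgen e a i)"
    by (rule sum.cong) auto
  have s2: "(\<Sum>i\<in>{1..t}. (c(0 := 0)) i) = (\<Sum>i\<in>{1..t}. c i)"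
    by (rule sum.cong) auto
  have "s = ordS e a t s * e + (\<Sum>i\<in>{1..t}. c i * dgen e a i)"
    using assms(2) unfolding assms(3)[symmetric] isfact_def sum_dgen[OF assms(1)] vec_len_split
    by (simp add: algebra_simps)
  then show "c(0 := 0) \<in> BD_facts e a t (s - ordS e a t s * e)"
    using assms(2) unfolding isfact_def BD_facts_def s1
    by simp
  show "vec_len t (c(0 := 0)) \<le> ordS e a t s"
    using assms(3) unfolding vec_len_split s2 by simp
qed


lemma ord_fact:
  assumes "numerical_semigroup S" "minimal_generators S = insert e (a ` {1..t})"
    "\<forall>j\<in>{1..t}. e < a j" "s \<in> S"
  shows "\<exists>c. isfact e a t c s \<and> vec_len t c = ordS e a t s" "ordS e a t s * e \<le> s"
proof -
  have e0: "0 < e" using ns_gen_in[OF assms(2)] by simp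
  obtain c where "isfact e a t c s" using gen[OF assms(1,2,4)] by blast
  then show "\<exists>c. isfact e a t c s \<and> vec_len t c = ordS e a t s"
    using ord_attained[OF e0 assms(3)] by blast
  then show "ordS e a t s * e \<le> s" using fact_len_le[OF e0 assms(3)] by metis
qed

lemma adj_bound:
  assumes "numerical_semigroup S" "minimal_generators S = insert e (a ` {1..t})"
    "\<forall>j\<in>{1..t}. e < a j" "s0 \<in> S" "s0 mod e = i" "u \<in> adjS S e a t i"
  shows "u \<le> s0"
proof -
  have e0: "0 < e" using ns_gen_in[OF assms(2)] by simp
  obtain s where s: "s \<in> S" "s mod e = i" "u = s - ordS e a t s * e"
    using assms(6) unfolding adjS_def by blast
  show ?thesis
  proof (cases "s \<le> s0")
    case True then show ?thesis using s by simp
  next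
    case False
    then have "e dvd s - s0" using s(2) assms(5) mod_eq_dvd_iff_nat[of s0 s e] by simp
    then obtain r where r: "s - s0 = e * r" by blast
    then have sr: "s = s0 + r * e" using False by (simp add: mult.commute)
    obtain c where "isfact e a t c s0" using gen[OF assms(1,2,4)] by blast
    then have "ordS e a t s0 + r \<le> ordS e a t s" using ord_add[OF e0 assms(3)] sr by metis
    then have "r \<le> ordS e a t s" by simp
    then have "r * e \<le> ordS e a t s * e" by (rule mult_le_mono1)
    then show ?thesis using s(3) sr by linarith
  qed
qed

lemma key:
  assumes "numerical_semigroup S" "minimal_generators S = insert e (a ` {1..t})"
    "\<forall>j\<in>{1..t}. e < a j"
    "u \<in> adjS S e a t i" "v \<in> adjS S e a t i" "v < u"
  shows "u + min_ord_BD e a t u * e \<le> v + min_ord_BD e a t v * e"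
proof -
  have e0: "0 < e" using ns_gen_in[OF assms(2)] by simp
  obtain su where su: "su \<in> S" "su mod e = i" "u = su - ordS e a t su * e"
    using assms(4) unfolding adjS_def by blast
  obtain sv where sv: "sv \<in> S" "sv mod e = i" "v = sv - ordS e a t sv * e"
    using assms(5) unfolding adjS_def by blast
  obtain cv where cv: "isfact e a t cv sv" "vec_len t cv = ordS e a t sv"
    using ord_fact[OF assms(1-3) sv(1)] by blast
  have svle: "ordS e a t sv * e \<le> sv" using ord_fact[OF assms(1-3) sv(1)] by blast
  have "cv(0 := 0) \<in> BD_facts e a t v" using drop_fact[OF assms(3) cv] sv(3) by simp
  then obtain y where y: "y \<in> BD_facts e a t v" "vec_len t y = min_ord_BD e a t v"
    using minord_attained[OF e0 assms(3)] by blast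
  define s' where "s' = v + vec_len t y * e"
  have s'eq: "s' = v + min_ord_BD e a t v * e" using s'_def y(2) by simp
  have fs': "isfact e a t (y(0 := 2 * y 0)) s'"
    using lift_fact(1)[OF assms(3) y(1)] s'_def by simp
  have "vec_len t y \<le> ordS e a t s'"
    using lift_fact(2)[OF assms(3) y(1)] ord_ge[OF e0 assms(3) fs'] by linarith
  then have ords': "min_ord_BD e a t v \<le> ordS e a t s'" using y(2) by simp
  have "sv = v + ordS e a t sv * e" using sv(3) svle by simp
  then have "sv mod e = v mod e" by (metis mod_mult_self1)
  moreover have "s' mod e = v mod e" unfolding s'_def by simp
  ultimately have s'mod: "s' mod e = i" using sv(2) by simp
  show ?thesis
  proof (cases "su \<le> s'")
    case True
    obtain cu where cu: "isfact e a t cu su" "vec_len t cu = ordS e a t su"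
      using ord_fact[OF assms(1-3) su(1)] by blast
    have sule: "ordS e a t su * e \<le> su" using ord_fact[OF assms(1-3) su(1)] by blast
    have "cu(0 := 0) \<in> BD_facts e a t u" using drop_fact(1)[OF assms(3) cu] su(3) by simp
    then have "min_ord_BD e a t u \<le> ordS e a t su"
      using minord_le[OF e0 assms(3)] drop_fact(2)[OF assms(3) cu] by (meson le_trans)
    then have "min_ord_BD e a t u * e \<le> ordS e a t su * e" by simp
    then show ?thesis using True su(3) sule s'eq by linarith
  next
    case False
    then have "e dvd su - s'" using su(2) s'mod mod_eq_dvd_iff_nat[of s' su e] by simp
    then obtain r where r: "su - s' = e * r" by blast
    then have sr: "su = s' + r * e" using False by (simp add: mult.commute)
    then have "ordS e a t s' + r \<le> ordS e a t su" using ord_add[OF e0 assms(3) fs'] by metis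
    then have "min_ord_BD e a t v + r \<le> ordS e a t su" using ords' by linarith
    then have "(min_ord_BD e a t v + r) * e \<le> ordS e a t su * e" by (rule mult_le_mono1)
    then have "min_ord_BD e a t v * e + r * e \<le> ordS e a t su * e" by (simp add: add_mult_distrib)
    then have "u \<le> v" using su(3) sr s'eq by linarith
    then show ?thesis using assms(6) by simp
  qed
qed


theorem lemma3p8:
  fixes S :: "nat set" and e t i :: nat and a :: "nat \<Rightarrow> nat"
    and uj uk :: nat and x :: "nat \<Rightarrow> nat"
  assumes "numerical_semigroup S"
    and "minimal_generators S = insert e (a ` {1..t})"
    and "\<forall>j\<in>{1..t}. e < a j"
    and "strict_mono_on {1..t} a"
    and "i < e"
    and "uj \<in> adjS S e a t i" and "uk \<in> adjS S e a t i" and "uk < uj"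
    and "x \<in> R_set S e a t i uj"
  shows "real (vec_len t x) < real (min_ord_BD e a t uk) - (real uj - real uk) / real e"
proof -
  define A where "A = adjS S e a t i"
  have e0: "0 < e" using ns_gen_in[OF assms(2)] by simp
  obtain s0 where s0: "s0 \<in> S" "s0 mod e = i"
    using assms(6) unfolding adjS_def by blast
  have finA: "finite A"
    by (rule finite_subset[of _ "{..s0}"])
       (use adj_bound[OF assms(1-3) s0] in \<open>auto simp: A_def\<close>)
  have "Min A \<le> uk" using finA assms(7) A_def by simp
  then have nmin: "uj \<noteq> Min A" using assms(8) by simp
  define p where "p = pred_in A uj"
  have finP: "finite {v \<in> A. v < uj}" using finA by simp
  have "uk \<in> {v \<in> A. v < uj}" using assms(7,8) A_def by simp
  then have pin: "p \<in> {v \<in> A. v < uj}"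
    unfolding p_def pred_in_def using finP by (intro Max_in) auto
  have ukp: "uk \<le> p"
    unfolding p_def pred_in_def using finP \<open>uk \<in> {v \<in> A. v < uj}\<close> by (intro Max_ge)
  have xR: "real (vec_len t x) < real (min_ord_BD e a t p) - (real uj - real p) / real e"
    using assms(9) nmin unfolding R_set_def Let_def A_def[symmetric] p_def by auto
  have kp: "p + min_ord_BD e a t p * e \<le> uk + min_ord_BD e a t uk * e"
  proof (cases "p = uk")
    case False
    then show ?thesis using key[OF assms(1-3), of p i uk] pin ukp assms(7) A_def by simp
  qed simp
  then have kpr: "real p + real (min_ord_BD e a t p) * real e \<le> real uk + real (min_ord_BD e a t uk) * real e"
    by (metis of_nat_add of_nat_mult of_nat_le_iff)
  have "(real p - real uk) / real e \<le> real (min_ord_BD e a t uk) - real (min_ord_BD e a t p)"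
  proof -
    have "real p - real uk \<le> (real (min_ord_BD e a t uk) - real (min_ord_BD e a t p)) * real e"
      using kpr by (simp add: algebra_simps)
    moreover have "real e > 0" using e0 by simp
    ultimately show ?thesis by (simp add: pos_divide_le_eq)
  qed
  moreover have "(real uj - real uk) / real e = (real uj - real p) / real e + (real p - real uk) / real e"
    by (simp add: diff_divide_distrib)
  ultimately show ?thesis using xR by linarith
qed

end
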